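(* Let $T_{init}$ be the number of nodes of the initial tree. The expected optimization time of (1+1) GP-single on MO-WMAJORITY is $O(T_{init}+n\log n)$.
   Context: Fix an integer $n\ge 1$ and real weights $w_1\ge w_2\ge\dots\ge w_n>0$. The terminal set is $T=\{x_1,\bar x_1,\dots,x_n,\bar x_n\}$ ($\bar x_i$ is the complement of $x_i$; $x_i$ is called positive). A syntax tree is either the empty tree or a rooted ordered binary tree whose inner nodes are all labelled by the binary function $J$ (join, exactly two ordered children) and whose leaves are labelled by elements of $T$. The complexity $C(X)$ is the number of nodes of $X$ (0 for the empty tree). The leaf list $l$ of $X$ is the sequence of leaf labels in an inorder traversal. WMAJORITY: WMAJORITY$(X)=\sum w_i$ over all $i$ such that $x_i$ occurs in $l$ at least once and at least as often as $\bar x_i$. MO-WMAJORITY$(X)=(\mathrm{WMAJORITY}(X),C(X))$, WMAJORITY to be maximized and $C$ minimized. Mutation (HVL-Prime applied $k$ times): each application chooses uniformly at random one of three operations. Substitute: replace a uniformly random leaf by a uniformly random $u\in T$. Insert: choose a uniformly random node $v$ and uniformly random $u\in T$, replace $v$ by a $J$-node with children $u$ and $v$ in uniformly random order (inserting into the empty tree yields the single leaf $u$). Delete: choose a uniformly random leaf $v$ with parent $p$ and sibling $u$, replace $p$ by $u$ (deleting $p$ and $v$; deleting the only leaf of a one-leaf tree yields the empty tree). Single-operation mutation uses $k=1$. (1+1) GP-single on MO-$F$: start with an initial tree $X$; in each iteration let $Y$ be $X$ mutated with $k=1$, and set $X:=Y$ iff $F(Y)>F(X)$, or $F(Y)=F(X)$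 and $C(Y)\le C(X)$. Expected optimization time: expected number of iterations (fitness evaluations) until the current solution is for the first time optimal, i.e. has maximum possible $F$-value and, among such trees, minimum complexity. *)

theory Defs
  imports "HOL-Probability.Probability"
begin

text \<open>Literals: (i, True) is the positive variable x_i, (i, False) its complement.\<close>
type_synonym lit = "nat \<times> bool"

text \<open>Non-empty syntax trees: leaves labelled by literals, inner nodes are J.
  A syntax tree (possibly empty) is an stree option, None being the empty tree.\<close>
datatype stree = Leaf lit | J stree stree

definition terminals :: "nat \<Rightarrow> lit set" where
  "terminals n = {(i, b). i \<in> {1..n}}"

fun leaves :: "stree \<Rightarrow> lit list" where
  "leaves (Leaf a) = [a]"
| "leaves (J l r) = leaves l @ leaves r"

fun nnodes :: "stree \<Rightarrow> nat" where
  "nnodes (Leaf a) = 1"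
| "nnodes (J l r) = 1 + nnodes l + nnodes r"

definition nleaves :: "stree \<Rightarrow> nat" where
  "nleaves t = length (leaves t)"

definition cplx :: "stree option \<Rightarrow> nat" where
  "cplx X = (case X of None \<Rightarrow> 0 | Some t \<Rightarrow> nnodes t)"

definition leaf_list :: "stree option \<Rightarrow> lit list" where
  "leaf_list X = (case X of None \<Rightarrow> [] | Some t \<Rightarrow> leaves t)"

definition over_T :: "nat \<Rightarrow> stree option \<Rightarrow> bool" where
  "over_T n X \<longleftrightarrow> set (leaf_list X) \<subseteq> terminals n"

definition wmaj :: "nat \<Rightarrow> (nat \<Rightarrow> real) \<Rightarrow> stree option \<Rightarrow> real" where
  "wmaj n w X = (\<Sum>i\<in>{1..n}.
      if count_list (leaf_list X) (i, True) \<ge> 1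
       \<and> count_list (leaf_list X) (i, True) \<ge> count_list (leaf_list X) (i, False)
      then w i else 0)"

text \<open>Replace the k-th leaf (inorder, 0-based) by u.\<close>
fun subst_leaf :: "nat \<Rightarrow> lit \<Rightarrow> stree \<Rightarrow> stree" where
  "subst_leaf k u (Leaf a) = Leaf u"
| "subst_leaf k u (J l r) =
     (if k < nleaves l then J (subst_leaf k u l) r
      else J l (subst_leaf (k - nleaves l) u r))"

text \<open>Insert at the k-th node (preorder, 0-based): replace it by J with children
  u and v; if b then u is the left child, else the right child.\<close>
fun ins_at :: "nat \<Rightarrow> lit \<Rightarrow> bool \<Rightarrow> stree \<Rightarrow> stree" where
  "ins_at k u b (Leaf a) =
     (if b then J (Leaf u) (Leaf a) else J (Leaf a) (Leaf u))"
| "ins_at k u b (J l r) =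
     (if k = 0 then (if b then J (Leaf u) (J l r) else J (J l r) (Leaf u))
      else if k - 1 < nnodes l then J (ins_at (k - 1) u b l) r
      else J l (ins_at (k - 1 - nnodes l) u b r))"

text \<open>Delete the k-th leaf (inorder, 0-based): its parent is replaced by its sibling;
  deleting the only leaf yields the empty tree.\<close>
fun del_leaf :: "nat \<Rightarrow> stree \<Rightarrow> stree option" where
  "del_leaf k (Leaf a) = None"
| "del_leaf k (J l r) =
     (if k < nleaves l then
        (case del_leaf k l of None \<Rightarrow> Some r | Some l' \<Rightarrow> Some (J l' r))
      else
        (case del_leaf (k - nleaves l) r of None \<Rightarrow> Some l | Some r' \<Rightarrow> Some (J l r')))"

text \<open>One application of HVL-Prime (k = 1).  Substitution and deletion on the
  empty tree (which has no leaves) leave it unchanged.\<close>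
definition hvl_prime :: "nat \<Rightarrow> stree option \<Rightarrow> stree option pmf" where
  "hvl_prime n X = do {
     op \<leftarrow> pmf_of_set {0::nat, 1, 2};
     (if op = 0 then
        (case X of None \<Rightarrow> return_pmf None
         | Some t \<Rightarrow> do {
             k \<leftarrow> pmf_of_set {..<nleaves t};
             u \<leftarrow> pmf_of_set (terminals n);
             return_pmf (Some (subst_leaf k u t)) })
      else if op = 1 then
        (case X of None \<Rightarrow> do { u \<leftarrow> pmf_of_set (terminals n); return_pmf (Some (Leaf u)) }
         | Some t \<Rightarrow> do {
             k \<leftarrow> pmf_of_set {..<nnodes t};
             u \<leftarrow> pmf_of_set (terminals n);
             b \<leftarrow> pmf_of_set (UNIV :: bool set);
             return_pmf (Some (ins_at k u b t)) })
      else
        (case X of None \<Rightarrow> return_pmf None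
         | Some t \<Rightarrow> do {
             k \<leftarrow> pmf_of_set {..<nleaves t};
             return_pmf (del_leaf k t) }))
   }"

definition accept :: "nat \<Rightarrow> (nat \<Rightarrow> real) \<Rightarrow> stree option \<Rightarrow> stree option \<Rightarrow> bool" where
  "accept n w X Y \<longleftrightarrow> wmaj n w Y > wmaj n w X
     \<or> (wmaj n w Y = wmaj n w X \<and> cplx Y \<le> cplx X)"

definition gp_step :: "nat \<Rightarrow> (nat \<Rightarrow> real) \<Rightarrow> stree option \<Rightarrow> stree option pmf" where
  "gp_step n w X = map_pmf (\<lambda>Y. if accept n w X Y then Y else X) (hvl_prime n X)"

definition optimal :: "nat \<Rightarrow> (nat \<Rightarrow> real) \<Rightarrow> stree option \<Rightarrow> bool" where
  "optimal n w X \<longleftrightarrow>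
     (\<forall>Y. over_T n Y \<longrightarrow> wmaj n w Y \<le> wmaj n w X) \<and>
     (\<forall>Y. over_T n Y \<longrightarrow> wmaj n w Y = wmaj n w X \<longrightarrow> cplx X \<le> cplx Y)"

text \<open>The process stopped at the first optimal tree: distribution after t iterations.\<close>
definition stopped_run :: "nat \<Rightarrow> (nat \<Rightarrow> real) \<Rightarrow> stree option \<Rightarrow> nat \<Rightarrow> stree option pmf" where
  "stopped_run n w X0 t =
     ((\<lambda>p. bind_pmf p (\<lambda>X. if optimal n w X then return_pmf X else gp_step n w X)) ^^ t)
       (return_pmf X0)"

text \<open>Expected optimization time E[T] = sum over t of Pr[T > t], where
  T is the first t with X_t optimal; Pr[T > t] = Pr[stopped chain not optimal at t].\<close>
definition opt_time :: "nat \<Rightarrow> (nat \<Rightarrow> real) \<Rightarrow> stree option \<Rightarrow> ennreal" where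
  "opt_time n w X0 =
     (\<Sum>t. ennreal (measure_pmf.prob (stopped_run n w X0 t) {X. \<not> optimal n w X}))"

end

theory Submission
  imports Defs
begin


lemma nleaves_len: "nleaves t = length (leaves t)" by (simp add: nleaves_def)

lemma leaves_ne: "leaves t \<noteq> []"
  by (induction t) auto

lemma nnodes_eq: "nnodes t = 2 * length (leaves t) - 1"
proof (induction t)
  case (Leaf a) then show ?case by simp
next
  case (J l r)
  have "length (leaves l) \<ge> 1" "length (leaves r) \<ge> 1" using leaves_ne
    by (metis One_nat_def Suc_leI length_greater_0_conv)+
  with J show ?case by simp
qed

lemma leaves_subst: "k < length (leaves t) \<Longrightarrow> leaves (subst_leaf k u t) = (leaves t)[k := u]"
proof (induction t arbitrary: k)
  case (Leaf a) then show ?case by simp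
next
  case (J l r)
  then show ?case by (auto simp: nleaves_len list_update_append)
qed

lemma mset_ins: "mset (leaves (ins_at k u b t)) = mset (leaves t) + {#u#}"
  by (induction t arbitrary: k) auto

lemma mset_del: "k < length (leaves t) \<Longrightarrow>
   mset (leaf_list (del_leaf k t)) = mset (leaves t) - {#leaves t ! k#}"
proof (induction t arbitrary: k)
  case (Leaf a) then show ?case by (simp add: leaf_list_def)
next
  case (J l r)
  show ?case
  proof (cases "k < length (leaves l)")
    case True
    have nth: "(leaves l @ leaves r) ! k = leaves l ! k" using True by (simp add: nth_append)
    have in1: "leaves l ! k \<in># mset (leaves l)" using True by simp
    show ?thesis
    proof (cases "del_leaf k l")
      case None
      with J.IH(1)[OF True] have "mset (leaves l) - {#leaves l ! k#} = {#}" by (simp add: leaf_list_def)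
      then have "mset (leaves l) = {#leaves l ! k#}" using in1
        by (metis add_diff_cancel_left' insert_DiffM)
      then have "mset (leaves l) + mset (leaves r) - {#leaves l ! k#} = mset (leaves r)"
        by (subst \<open>mset (leaves l) = _\<close>) simp
      then show ?thesis using True None nth by (simp add: leaf_list_def nleaves_len)
    next
      case (Some l')
      with J.IH(1)[OF True] have "mset (leaves l') = mset (leaves l) - {#leaves l ! k#}" by (simp add: leaf_list_def)
      then show ?thesis using True Some nth in1 by (simp add: leaf_list_def nleaves_len)
    qed
  next
    case False
    let ?k = "k - length (leaves l)"
    have kk: "?k < length (leaves r)" using False J.prems by simp
    have nth: "(leaves l @ leaves r) ! k = leaves r ! ?k" using False by (simp add: nth_append)
    have in1: "leaves r ! ?k \<in># mset (leaves r)" using kk by simp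
    show ?thesis
    proof (cases "del_leaf ?k r")
      case None
      with J.IH(2)[OF kk] have "mset (leaves r) - {#leaves r ! ?k#} = {#}" by (simp add: leaf_list_def)
      then have "mset (leaves r) = {#leaves r ! ?k#}" using in1
        by (metis add_diff_cancel_left' insert_DiffM)
      then have "mset (leaves l) + mset (leaves r) - {#leaves r ! ?k#} = mset (leaves l)"
        by (subst \<open>mset (leaves r) = _\<close>) simp
      then show ?thesis using False None nth by (simp add: leaf_list_def nleaves_len)
    next
      case (Some r')
      with J.IH(2)[OF kk] have "mset (leaves r') = mset (leaves r) - {#leaves r ! ?k#}" by (simp add: leaf_list_def)
      then show ?thesis using False Some nth in1 by (simp add: leaf_list_def nleaves_len)
    qed
  qed
qed



definition pc :: "lit multiset \<Rightarrow> nat \<Rightarrow> nat" where "pc M i = count M (i, True)"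
definition nc :: "lit multiset \<Rightarrow> nat \<Rightarrow> nat" where "nc M i = count M (i, False)"
definition exb :: "lit multiset \<Rightarrow> nat \<Rightarrow> bool" where "exb M i \<longleftrightarrow> 1 \<le> pc M i \<and> nc M i \<le> pc M i"
definition EXs :: "nat \<Rightarrow> lit multiset \<Rightarrow> nat set" where "EXs n M = {i\<in>{1..n}. exb M i}"
definition RR :: "nat \<Rightarrow> lit multiset \<Rightarrow> nat" where "RR n M = card (EXs n M)"
definition WM :: "nat \<Rightarrow> (nat \<Rightarrow> real) \<Rightarrow> lit multiset \<Rightarrow> real" where "WM n w M = sum w (EXs n M)"
definition lm :: "stree option \<Rightarrow> lit multiset" where "lm X = mset (leaf_list X)"

lemma fin_EXs[simp]: "finite (EXs n M)" by (simp add: EXs_def)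
lemma EXs_sub: "EXs n M \<subseteq> {1..n}" by (auto simp: EXs_def)

lemma wmaj_WM: "wmaj n w X = WM n w (lm X)"
proof -
  have "wmaj n w X = (\<Sum>i\<in>{1..n}. if exb (lm X) i then w i else 0)"
    by (simp add: wmaj_def exb_def pc_def nc_def lm_def count_mset)
  also have "\<dots> = sum w (EXs n (lm X))"
    unfolding EXs_def by (rule sum.inter_filter[symmetric]) simp
  finally show ?thesis by (simp add: WM_def)
qed

lemma cplx_size: "cplx X = (if size (lm X) = 0 then 0 else 2 * size (lm X) - 1)"
  by (cases X) (auto simp: cplx_def lm_def leaf_list_def nnodes_eq leaves_ne)

lemma SZ: "finite I \<Longrightarrow> (\<Sum>i\<in>I. pc M i + nc M i) \<le> size M"
proof (induction M)
  case empty then show ?case by (simp add: pc_def nc_def)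
next
  case (add x M)
  obtain j c where x: "x = (j, c)" by (cases x)
  have "(\<Sum>i\<in>I. pc (add_mset x M) i + nc (add_mset x M) i)
        = (\<Sum>i\<in>I. pc M i + nc M i) + (\<Sum>i\<in>I. if i = j then 1 else 0)"
    by (cases c) (simp_all add: x pc_def nc_def sum.distrib[symmetric] if_distrib, auto intro!: sum.cong)
  also have "(\<Sum>i\<in>I. if i = j then 1 else 0) \<le> (1::nat)"
    using add.prems by (simp add: sum.delta)
  finally show ?case using add by simp
qed

lemma R_le: "RR n M \<le> size M"
proof -
  have "RR n M = (\<Sum>i\<in>EXs n M. 1)" by (simp add: RR_def)
  also have "\<dots> \<le> (\<Sum>i\<in>EXs n M. pc M i + nc M i)"
    by (rule sum_mono) (auto simp: EXs_def exb_def)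
  also have "\<dots> \<le> size M" by (rule SZ) simp
  finally show ?thesis .
qed

lemma R_le_n: "RR n M \<le> n"
  using card_mono[OF _ EXs_sub, of n M] by (simp add: RR_def)

lemma K0: assumes "size M = RR n M" "i \<in> {1..n}" "i \<notin> EXs n M"
  shows "pc M i = 0 \<and> nc M i = 0"
proof -
  have "(\<Sum>j\<in>insert i (EXs n M). pc M j + nc M j) \<le> size M" by (rule SZ) simp
  moreover have "(\<Sum>j\<in>insert i (EXs n M). pc M j + nc M j) = pc M i + nc M i + (\<Sum>j\<in>EXs n M. pc M j + nc M j)"
    using assms by simp
  moreover have "RR n M \<le> (\<Sum>j\<in>EXs n M. pc M j + nc M j)"
  proof -
    have "RR n M = (\<Sum>i\<in>EXs n M. 1)" by (simp add: RR_def)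
    also have "\<dots> \<le> (\<Sum>i\<in>EXs n M. pc M i + nc M i)"
      by (rule sum_mono) (auto simp: EXs_def exb_def)
    finally show ?thesis .
  qed
  ultimately show ?thesis using assms(1) by linarith
qed

definition agree :: "nat set \<Rightarrow> lit multiset \<Rightarrow> lit multiset \<Rightarrow> bool" where
  "agree S M M' \<longleftrightarrow> (\<forall>i b. i \<notin> S \<longrightarrow> count M' (i, b) = count M (i, b))"

lemma agree_EX: assumes "agree S M M'" shows "EXs n M' - S = EXs n M - S"
proof -
  have "\<forall>x. x \<notin> S \<longrightarrow> pc M' x = pc M x \<and> nc M' x = nc M x"
    using assms by (simp add: agree_def pc_def nc_def)
  then show ?thesis by (auto simp: EXs_def exb_def)
qed

lemma small2: assumes "finite S" "card S \<le> 2" "A \<subseteq> S" "A' \<subseteq> S" "card A' < card A"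
  shows "A' \<subset> A"
proof (cases "card A = 2")
  case True
  then have "A = S" using assms card_subset_eq[of S A] card_mono[of S A] by simp
  then show ?thesis using assms by auto
next
  case False
  then have "card A \<le> 1" using assms card_mono[of S A] by simp
  then have "card A' = 0" using assms by simp
  moreover have "finite A'" using assms finite_subset by blast
  ultimately have "A' = {}" by simp
  then show ?thesis using assms by auto
qed

lemma small1: assumes "finite S" "card S \<le> 1" "A \<subseteq> S" "A' \<subseteq> S" "card A' \<le> card A"
  shows "A' \<subseteq> A"
proof (cases "A = {}")
  case True
  then have "card A' = 0" using assms by simp
  moreover have "finite A'" using assms finite_subset by blast
  ultimately have "A' = {}" by simp
  then show ?thesis by auto
next
  case False
  have fA: "finite A" using assms finite_subset by blast
  with False have "card A \<noteq> 0" by simp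
  moreover have "card A \<le> card S" using assms card_mono by blast
  ultimately have "card A = card S" using assms(2) by linarith
  then have "A = S" using card_subset_eq[OF assms(1,3)] by simp
  then show ?thesis using assms by auto
qed

lemma split_R: "RR n M = card (EXs n M - S) + card (EXs n M \<inter> S)"
proof -
  have e: "EXs n M = (EXs n M - S) \<union> (EXs n M \<inter> S)" by auto
  show ?thesis unfolding RR_def by (subst e, rule card_Un_disjoint) auto
qed

lemma split_W: "WM n w M = sum w (EXs n M - S) + sum w (EXs n M \<inter> S)"
proof -
  have e: "EXs n M = (EXs n M - S) \<union> (EXs n M \<inter> S)" by auto
  show ?thesis unfolding WM_def by (subst e, rule sum.union_disjoint) auto
qed

lemma sum_strict: assumes "A' \<subset> A" "finite A" "A \<subseteq> {1..n}" "\<forall>i\<in>{1..n}. w i > (0::real)"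
  shows "sum w A' < sum w A"
proof -
  have "A' \<subseteq> A" using assms by auto
  then have "sum w A = sum w (A - A') + sum w A'"
    using assms(2) by (rule sum.subset_diff)
  moreover have "sum w (A - A') > 0"
    using assms by (intro sum_pos) auto
  ultimately show ?thesis by simp
qed

lemma mono2: assumes "agree S M M'" "finite S" "card S \<le> 2" "\<forall>i\<in>{1..n}. w i > 0"
  "WM n w M \<le> WM n w M'" shows "RR n M \<le> RR n M'"
proof (rule ccontr)
  assume c: "\<not> ?thesis"
  let ?A = "EXs n M \<inter> S" and ?A' = "EXs n M' \<inter> S"
  have B: "EXs n M' - S = EXs n M - S" using agree_EX[OF assms(1)] .
  note s = split_R[of n M S] split_W[of n w M S] split_R[of n M' S] split_W[of n w M' S]
  have "card ?A' < card ?A" using c unfolding s B by linarith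
  then have "?A' \<subset> ?A" using small2[OF assms(2,3), of ?A ?A'] by blast
  then have "sum w ?A' < sum w ?A" using sum_strict[of ?A' ?A n w] assms(4) EXs_sub[of n M] by auto
  then show False using assms(5) unfolding s B by linarith
qed

lemma mono1: assumes "agree S M M'" "finite S" "card S \<le> 1" "\<forall>i\<in>{1..n}. w i > 0"
  "WM n w M < WM n w M'" shows "RR n M < RR n M'"
proof (rule ccontr)
  assume c: "\<not> ?thesis"
  let ?A = "EXs n M \<inter> S" and ?A' = "EXs n M' \<inter> S"
  have B: "EXs n M' - S = EXs n M - S" using agree_EX[OF assms(1)] .
  note s = split_R[of n M S] split_W[of n w M S] split_R[of n M' S] split_W[of n w M' S]
  have "card ?A' \<le> card ?A" using c unfolding s B by linarith
  then have "?A' \<subseteq> ?A" using small1[OF assms(2,3), of ?A ?A'] by blast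
  then have "sum w ?A' \<le> sum w ?A" using assms(4) EXs_sub[of n M]
    by (intro sum_mono2) (auto intro: less_imp_le)
  then show False using assms(5) unfolding s B by linarith
qed



lemma terminals_fin: "finite (terminals n)"
proof -
  have "terminals n = {1..n} \<times> UNIV" by (auto simp: terminals_def)
  then show ?thesis by simp
qed

lemma terminals_ne: "n \<ge> 1 \<Longrightarrow> terminals n \<noteq> {}"
  by (auto simp: terminals_def)

lemma terminals_card: "card (terminals n) = 2 * n"
proof -
  have "terminals n = {1..n} \<times> UNIV" by (auto simp: terminals_def)
  then show ?thesis by (simp add: card_cartesian_product)
qed

lemma lm_Some: "lm (Some t) = mset (leaves t)" by (simp add: lm_def leaf_list_def)
lemma lm_None: "lm None = {#}" by (simp add: lm_def leaf_list_def)

lemma supp: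
  assumes "n \<ge> 1" "Y \<in> set_pmf (hvl_prime n X)"
  shows "lm Y = lm X \<or> (\<exists>u. lm Y = lm X + {#u#}) \<or> (\<exists>a. a \<in># lm X \<and> lm Y = lm X - {#a#})
     \<or> (\<exists>a u. a \<in># lm X \<and> lm Y = lm X - {#a#} + {#u#})"
proof (cases X)
  case None
  then show ?thesis using assms terminals_fin terminals_ne[OF assms(1)]
    by (auto simp: hvl_prime_def lm_None lm_Some split: if_splits)
next
  case (Some t)
  have "nnodes t > 0" by (cases t) auto
  moreover have "nleaves t > 0" using leaves_ne[of t] by (simp add: nleaves_len)
  ultimately have ne: "{..<nleaves t} \<noteq> {}" "{..<nnodes t} \<noteq> {}"
    by (auto simp: lessThan_empty_iff)
  from assms(2) Some ne terminals_fin terminals_ne[OF assms(1)]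
  consider (s) k u where "k < nleaves t" "Y = Some (subst_leaf k u t)"
    | (i) k u b where "Y = Some (ins_at k u b t)"
    | (d) k where "k < nleaves t" "Y = del_leaf k t"
    by (auto simp: hvl_prime_def split: if_splits) blast+
  then show ?thesis
  proof cases
    case s
    then have "lm Y = lm X - {#leaves t ! k#} + {#u#}"
      by (simp add: Some lm_Some leaves_subst nleaves_len mset_update)
    moreover have "leaves t ! k \<in># lm X" using s by (simp add: Some lm_Some nleaves_len)
    ultimately show ?thesis by blast
  next
    case i
    then show ?thesis by (simp add: Some lm_Some mset_ins)
  next
    case d
    then have "lm Y = lm X - {#leaves t ! k#}"
      using mset_del[of k t] by (simp add: Some lm_def nleaves_len leaf_list_def)
    moreover have "leaves t ! k \<in># lm X" using d by (simp add: Some lm_Some nleaves_len)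
    ultimately show ?thesis by blast
  qed
qed

lemma sz_mem: "a \<in># M \<Longrightarrow> size M = Suc (size (M - {#a#}))"
  by (metis insert_DiffM size_add_mset)

definition cf :: "nat \<Rightarrow> nat" where "cf L = (if L = 0 then 0 else 2 * L - 1)"

lemma cf_le: "cf a \<le> cf b \<longleftrightarrow> a \<le> b" by (auto simp: cf_def)

lemma accept_iff: "accept n w X Y \<longleftrightarrow> WM n w (lm X) < WM n w (lm Y)
   \<or> (WM n w (lm Y) = WM n w (lm X) \<and> size (lm Y) \<le> size (lm X))"
proof -
  have "cplx X = cf (size (lm X))" "cplx Y = cf (size (lm Y))" by (simp_all add: cplx_size cf_def)
  then have "cplx Y \<le> cplx X \<longleftrightarrow> size (lm Y) \<le> size (lm X)"
    using cf_le by simp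
  then show ?thesis by (simp add: accept_def wmaj_WM)
qed

definition KK :: "nat \<Rightarrow> lit multiset \<Rightarrow> nat" where "KK n M = size M - RR n M"

lemma mono_step:
  assumes "n \<ge> 1" "\<forall>i\<in>{1..n}. w i > 0" "Y \<in> set_pmf (hvl_prime n X)" "accept n w X Y"
  shows "RR n (lm X) \<le> RR n (lm Y) \<and> KK n (lm Y) \<le> KK n (lm X)
       \<and> (size (lm Y) < size (lm X) \<longrightarrow> KK n (lm Y) < KK n (lm X))"
proof -
  let ?M = "lm X" and ?M' = "lm Y"
  have acc: "WM n w ?M < WM n w ?M' \<or> (WM n w ?M' = WM n w ?M \<and> size ?M' \<le> size ?M)"
    using assms(4) accept_iff by blast
  have RM: "RR n ?M \<le> size ?M" "RR n ?M' \<le> size ?M'" using R_le by auto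
  from supp[OF assms(1,3)] consider (e) "?M' = ?M" | (i) u where "?M' = ?M + {#u#}"
    | (d) a where "a \<in># ?M" "?M' = ?M - {#a#}" | (s) a u where "a \<in># ?M" "?M' = ?M - {#a#} + {#u#}"
    by blast
  then show ?thesis
  proof cases
    case e then show ?thesis by simp
  next
    case i
    have ag: "agree {fst u} ?M ?M'" using i by (auto simp: agree_def)
    have "WM n w ?M < WM n w ?M'" using acc i by auto
    then have "RR n ?M < RR n ?M'" using mono1[OF ag _ _ assms(2)] by simp
    then show ?thesis using i RM by (simp add: KK_def)
  next
    case d
    have ag: "agree {fst a} ?M ?M'" using d by (auto simp: agree_def)
    have "?M = add_mset a (?M - {#a#})" using d(1) by (simp add: insert_DiffM)
    then have "size ?M = Suc (size (?M - {#a#}))" by (metis size_add_mset)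
    then have sz: "size ?M' = size ?M - 1" "size ?M \<ge> 1" using d by auto
    have "WM n w ?M \<le> WM n w ?M'" using acc by auto
    then have "RR n ?M \<le> RR n ?M'" using mono2[OF ag _ _ assms(2)] by simp
    then show ?thesis using sz RM unfolding KK_def by linarith
  next
    case s
    have ag: "agree {fst a, fst u} ?M ?M'" using s by (auto simp: agree_def)
    have sz: "size ?M' = size ?M" using s sz_mem[OF s(1)] by simp
    have cS: "card {fst a, fst u} \<le> 2" by (simp add: card_insert_le_m1)
    have "WM n w ?M \<le> WM n w ?M'" using acc by auto
    then have "RR n ?M \<le> RR n ?M'" using mono2[OF ag _ cS assms(2)] by simp
    then show ?thesis using sz RM by (simp add: KK_def)
  qed
qed



definition del_ok :: "nat \<Rightarrow> (nat \<Rightarrow> real) \<Rightarrow> lit multiset \<Rightarrow> lit \<Rightarrow> bool" where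
  "del_ok n w M a \<longleftrightarrow> WM n w M \<le> WM n w (M - {#a#})"

definition NN :: "nat \<Rightarrow> lit multiset \<Rightarrow> nat set" where
  "NN n M = {i \<in> EXs n M. pc M i = 1 \<or> pc M i = nc M i}"

lemma WM_sub: assumes "EXs n M \<subseteq> EXs n M'" "\<forall>i\<in>{1..n}. w i > 0"
  shows "WM n w M \<le> WM n w M'"
  unfolding WM_def using assms EXs_sub[of n M'] by (intro sum_mono2) (auto intro: less_imp_le)

lemma nondel: assumes "a \<in># M" "\<not> del_ok n w M a" "\<forall>i\<in>{1..n}. w i > 0"
  shows "snd a \<and> fst a \<in> NN n M"
proof -
  obtain i c where a: "a = (i, c)" by (cases a)
  let ?M' = "M - {#a#}"
  have ag: "agree {i} M ?M'" using a by (auto simp: agree_def)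
  have B: "EXs n ?M' - {i} = EXs n M - {i}" using agree_EX[OF ag] .
  have iE: "i \<in> EXs n M \<and> i \<notin> EXs n ?M'"
  proof (rule ccontr)
    assume "\<not> ?thesis"
    then have "EXs n M \<subseteq> EXs n ?M'" using B by blast
    then show False using assms(2,3) WM_sub unfolding del_ok_def by blast
  qed
  have cnt: "count M a \<ge> 1" using assms(1) by (simp add: Suc_le_eq)
  show ?thesis
  proof (cases c)
    case False
    have "pc ?M' i = pc M i" "nc ?M' i = nc M i - 1" using a False by (auto simp: pc_def nc_def)
    then have "exb ?M' i" using iE by (auto simp: EXs_def exb_def)
    then show ?thesis using iE by (auto simp: EXs_def)
  next
    case True
    have "pc ?M' i = pc M i - 1" "nc ?M' i = nc M i" using a True by (auto simp: pc_def nc_def)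
    moreover have "pc M i \<ge> 1" "nc M i \<le> pc M i" using iE by (auto simp: EXs_def exb_def)
    moreover have "\<not> exb ?M' i" using iE by (auto simp: EXs_def)
    ultimately have "pc M i = 1 \<or> pc M i = nc M i" unfolding exb_def by linarith
    then show ?thesis using iE a True by (simp add: NN_def)
  qed
qed

lemma FS: "finite N \<Longrightarrow> size (filter_mset (\<lambda>a. snd a \<and> fst a \<in> N) M) = (\<Sum>i\<in>N. pc M i)"
proof (induction M)
  case empty then show ?case by (simp add: pc_def)
next
  case (add x M)
  obtain j c where x: "x = (j, c)" by (cases x)
  have "(\<Sum>i\<in>N. pc (add_mset x M) i) = (\<Sum>i\<in>N. pc M i) + (\<Sum>i\<in>N. if i = j \<and> c then 1 else 0)"
    by (simp add: x pc_def sum.distrib[symmetric], auto intro!: sum.cong)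
  also have "(\<Sum>i\<in>N. if i = j \<and> c then 1 else 0) = (if j \<in> N \<and> c then 1 else (0::nat))"
    using add.prems by (cases c) (simp_all add: sum.delta)
  finally show ?case using add x by auto
qed

lemma del_count: assumes "\<forall>i\<in>{1..n}. w i > 0"
  shows "size M \<le> 2 * size (filter_mset (del_ok n w M) M) + RR n M"
proof -
  let ?N = "NN n M"
  have finN: "finite ?N" by (simp add: NN_def)
  have "filter_mset (\<lambda>a. \<not> del_ok n w M a) M \<subseteq># filter_mset (\<lambda>a. snd a \<and> fst a \<in> ?N) M"
    by (rule filter_mset_mono_strong) (use nondel[OF _ _ assms] in auto)
  then have nd: "size (filter_mset (\<lambda>a. \<not> del_ok n w M a) M) \<le> (\<Sum>i\<in>?N. pc M i)"
    using FS[OF finN, of M] by (metis size_mset_mono)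
  have part: "size M = size (filter_mset (del_ok n w M) M) + size (filter_mset (\<lambda>a. \<not> del_ok n w M a) M)"
    by (metis multiset_partition size_union)
  have s1: "(\<Sum>i\<in>?N. pc M i + nc M i) \<le> size M" by (rule SZ[OF finN])
  have s2: "card ?N \<le> RR n M" unfolding RR_def NN_def by (rule card_mono) auto
  have s3: "(\<Sum>i\<in>?N. 2 * pc M i) \<le> (\<Sum>i\<in>?N. pc M i + nc M i + 1)"
    by (rule sum_mono) (auto simp: NN_def)
  have s4: "(\<Sum>i\<in>?N. pc M i + nc M i + 1) = (\<Sum>i\<in>?N. pc M i + nc M i) + card ?N"
    by (simp only: sum.distrib card_eq_sum)
  have s5: "(\<Sum>i\<in>?N. 2 * pc M i) = 2 * (\<Sum>i\<in>?N. pc M i)" by (simp add: sum_distrib_left)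
  show ?thesis using nd part s1 s2 s3 s4 s5 by linarith
qed

lemma ins_good: assumes "size M = RR n M" "i \<in> {1..n}" "i \<notin> EXs n M" "\<forall>i\<in>{1..n}. w i > 0"
  shows "WM n w M < WM n w (M + {#(i, True)#}) \<and> RR n M < RR n (M + {#(i, True)#})"
proof -
  let ?M' = "M + {#(i, True)#}"
  have z: "pc M i = 0 \<and> nc M i = 0" using K0[OF assms(1-3)] .
  have ag: "agree {i} M ?M'" by (auto simp: agree_def)
  have B: "EXs n ?M' - {i} = EXs n M - {i}" using agree_EX[OF ag] .
  have "exb ?M' i" using z by (simp add: exb_def pc_def nc_def)
  then have "i \<in> EXs n ?M'" using assms(2) by (simp add: EXs_def)
  then have e: "EXs n ?M' = insert i (EXs n M)" using B assms(3) by blast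
  have "WM n w ?M' = w i + WM n w M" unfolding WM_def e using assms(3) by simp
  then have "WM n w M < WM n w ?M'" using assms(2,4) by simp
  moreover have "RR n ?M' = Suc (RR n M)" unfolding RR_def e using assms(3) by simp
  ultimately show ?thesis by simp
qed

definition H :: "nat \<Rightarrow> real" where "H m = (\<Sum>j\<in>{1..m}. 1 / real j)"

lemma H_Suc: "H (Suc m) = H m + 1 / real (Suc m)" by (simp add: H_def)
lemma H_0: "H 0 = 0" by (simp add: H_def)
lemma H_mono: "a \<le> b \<Longrightarrow> H a \<le> H b"
  unfolding H_def by (rule sum_mono2) auto
lemma H_nonneg: "H a \<ge> 0" unfolding H_def by (rule sum_nonneg) auto

definition V :: "nat \<Rightarrow> lit multiset \<Rightarrow> real" where
  "V n M = 6 * real (KK n M) + 6 * real n * H (KK n M) + 6 * real n * H (n - RR n M)"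

lemma V_nonneg: "V n M \<ge> 0" unfolding V_def using H_nonneg by simp

lemma V_mono: assumes "KK n M' \<le> KK n M" "RR n M \<le> RR n M'"
  shows "V n M' \<le> V n M"
proof -
  have "H (KK n M') \<le> H (KK n M)" using H_mono assms by simp
  moreover have "H (n - RR n M') \<le> H (n - RR n M)" using H_mono assms by simp
  ultimately show ?thesis unfolding V_def using assms
    by (intro add_mono mult_left_mono) auto
qed

lemma V_dropK: assumes "KK n M' < KK n M" "RR n M \<le> RR n M'"
  shows "V n M' + (6 + 6 * real n / real (KK n M)) \<le> V n M"
proof -
  obtain k where k: "KK n M = Suc k" "KK n M' \<le> k" using assms by (cases "KK n M") auto
  have "H (KK n M') \<le> H k" using H_mono k by simp
  then have h1: "real n * H (KK n M') \<le> real n * H k" by (simp add: mult_left_mono)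
  have h2: "real n * H (n - RR n M') \<le> real n * H (n - RR n M)" using H_mono assms by (simp add: mult_left_mono)
  have "real n * H (KK n M) = real n * H k + real n / real (KK n M)" using k by (simp add: H_Suc algebra_simps)
  then show ?thesis using h1 h2 k unfolding V_def by simp
qed

lemma V_dropR: assumes "KK n M' \<le> KK n M" "RR n M < RR n M'" "RR n M' \<le> n"
  shows "V n M' + 6 * real n / real (n - RR n M) \<le> V n M"
proof -
  obtain k where k: "n - RR n M = Suc k" "n - RR n M' \<le> k" using assms by (cases "n - RR n M") auto
  have "H (n - RR n M') \<le> H k" using H_mono k by simp
  then have h1: "real n * H (n - RR n M') \<le> real n * H k" by (simp add: mult_left_mono)
  have h2: "real n * H (KK n M') \<le> real n * H (KK n M)" using H_mono assms by (simp add: mult_left_mono)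
  have "real n * H (n - RR n M) = real n * H k + real n / real (n - RR n M)" using k by (simp add: H_Suc algebra_simps)
  then show ?thesis using h1 h2 k assms(1) unfolding V_def by simp
qed



lemma em_bind_lb:
  assumes "\<And>x. x \<in> B \<Longrightarrow> ennreal c \<le> emeasure (measure_pmf (f x)) A"
  shows "ennreal c * emeasure (measure_pmf p) B \<le> emeasure (measure_pmf (bind_pmf p f)) A"
proof -
  have "ennreal c * emeasure (measure_pmf p) B = (\<integral>\<^sup>+x. ennreal c * indicator B x \<partial>measure_pmf p)"
    by (simp add: nn_integral_cmult_indicator)
  also have "\<dots> \<le> (\<integral>\<^sup>+x. emeasure (measure_pmf (f x)) A \<partial>measure_pmf p)"
    by (rule nn_integral_mono) (auto simp: indicator_def assms)
  also have "\<dots> = emeasure (measure_pmf (bind_pmf p f)) A" by simp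
  finally show ?thesis .
qed

lemma em_pmf_of_set: "finite S \<Longrightarrow> S \<noteq> {} \<Longrightarrow>
  emeasure (measure_pmf (pmf_of_set S)) B = ennreal (real (card (S \<inter> B)) / real (card S))"
  by (simp add: measure_pmf.emeasure_eq_measure measure_pmf_of_set)

lemma DR:
  assumes "\<And>Y. Y \<in> set_pmf p \<Longrightarrow> ennreal (f Y) + ennreal d * indicator G Y \<le> ennreal v"
    "ennreal q \<le> emeasure (measure_pmf p) G" "1 \<le> d * q" "d \<ge> 0" "q \<ge> 0"
  shows "(\<integral>\<^sup>+Y. ennreal (f Y) \<partial>measure_pmf p) + 1 \<le> ennreal v"
proof -
  have "1 \<le> ennreal (d * q)" using assms(3) by (simp add: ennreal_1[symmetric] del: ennreal_1)
  also have "\<dots> = ennreal d * ennreal q" using assms(4,5) by (simp add: ennreal_mult)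
  also have "\<dots> \<le> ennreal d * emeasure (measure_pmf p) G" using assms(2) by (simp add: mult_left_mono)
  finally have one: "1 \<le> ennreal d * emeasure (measure_pmf p) G" .
  have "(\<integral>\<^sup>+Y. ennreal (f Y) \<partial>measure_pmf p) + ennreal d * emeasure (measure_pmf p) G
      = (\<integral>\<^sup>+Y. ennreal (f Y) + ennreal d * indicator G Y \<partial>measure_pmf p)"
    by (simp add: nn_integral_add nn_integral_cmult_indicator)
  also have "\<dots> \<le> (\<integral>\<^sup>+Y. ennreal v \<partial>measure_pmf p)"
    by (rule nn_integral_mono_AE) (simp add: AE_measure_pmf_iff assms(1))
  also have "\<dots> = ennreal v" by simp
  finally show ?thesis using one by (meson add_left_mono order_trans)
qed



lemma em3: "emeasure (measure_pmf (pmf_of_set {0::nat,1,2})) {x} = ennreal (1/3)" if "x \<in> {0,1,2}"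
  using that by (subst em_pmf_of_set) auto

lemma prob_del:
  assumes n: "n \<ge> 1" and wp: "\<forall>i\<in>{1..n}. w i > 0" and X: "X = Some t"
  shows "ennreal (real (size (filter_mset (del_ok n w (lm X)) (lm X))) / real (size (lm X)) / 3)
     \<le> emeasure (measure_pmf (hvl_prime n X)) {Y. accept n w X Y \<and> KK n (lm Y) < KK n (lm X)}"
proof -
  let ?G = "{Y. accept n w X Y \<and> KK n (lm Y) < KK n (lm X)}"
  let ?ls = "leaves t" let ?L = "length (leaves t)" let ?M = "lm X"
  define Bk where "Bk = {k. k < ?L \<and> del_ok n w ?M (?ls ! k)}"
  have L0: "?L > 0" using leaves_ne[of t] by simp
  have M: "?M = mset ?ls" using X by (simp add: lm_Some)
  have memG: "del_leaf k t \<in> ?G" if k: "k \<in> Bk" for k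
  proof -
    let ?Y = "del_leaf k t"
    have kL: "k < ?L" and ok: "del_ok n w ?M (?ls ! k)" using k by (auto simp: Bk_def)
    have lY: "lm ?Y = ?M - {#?ls ! k#}" using mset_del[OF kL] M by (simp add: lm_def)
    have inM: "?ls ! k \<in># ?M" using kL M by simp
    have sz: "size (lm ?Y) < size ?M" using sz_mem[OF inM] lY by simp
    have acc: "accept n w X ?Y" unfolding accept_iff using ok sz lY by (auto simp: del_ok_def)
    have fin: "finite {..<nnodes t}" "{..<nnodes t} \<noteq> {}" by (auto simp: lessThan_empty_iff) (cases t; simp)
    have br: "?Y \<in> set_pmf (bind_pmf (pmf_of_set {..<nleaves t}) (\<lambda>k. return_pmf (del_leaf k t)))"
      using kL L0 by (auto simp: nleaves_len lessThan_empty_iff)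
    have "?Y \<in> set_pmf (hvl_prime n X)"
      unfolding hvl_prime_def set_bind_pmf
      by (rule UN_I[of 2]) (use br in \<open>simp_all add: X\<close>)
    then show ?thesis using mono_step[OF n wp _ acc] sz acc by auto
  qed
  have cardBk: "card Bk = size (filter_mset (del_ok n w ?M) ?M)"
    unfolding Bk_def M by (simp add: length_filter_conv_card[symmetric] mset_filter[symmetric] del: mset_filter)
  have s2: "ennreal (real (card Bk) / real ?L) \<le>
    emeasure (measure_pmf (bind_pmf (pmf_of_set {..<nleaves t}) (\<lambda>k. return_pmf (del_leaf k t)))) ?G"
  proof -
    have "ennreal 1 * emeasure (measure_pmf (pmf_of_set {..<nleaves t})) Bk \<le>
      emeasure (measure_pmf (bind_pmf (pmf_of_set {..<nleaves t}) (\<lambda>k. return_pmf (del_leaf k t)))) ?G"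
      by (rule em_bind_lb) (use memG in simp)
    moreover have "emeasure (measure_pmf (pmf_of_set {..<nleaves t})) Bk = ennreal (real (card Bk) / real ?L)"
    proof -
      have "{..<nleaves t} \<inter> Bk = Bk" by (auto simp: Bk_def nleaves_len)
      then show ?thesis using L0 by (subst em_pmf_of_set) (auto simp: nleaves_len lessThan_empty_iff)
    qed
    ultimately show ?thesis by simp
  qed
  have "ennreal (real (card Bk) / real ?L) * emeasure (measure_pmf (pmf_of_set {0::nat,1,2})) {2}
      \<le> emeasure (measure_pmf (hvl_prime n X)) ?G"
    unfolding hvl_prime_def by (rule em_bind_lb) (use s2 in \<open>simp add: X\<close>)
  then have "ennreal (real (card Bk) / real ?L) * ennreal (1/3) \<le> emeasure (measure_pmf (hvl_prime n X)) ?G"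
    using em3[of 2] by simp
  then show ?thesis using cardBk M by (simp add: ennreal_mult[symmetric])
qed

lemma Gl_card: assumes "n \<ge> 1"
  shows "card (terminals n \<inter> (\<lambda>i. (i, True)) ` ({1..n} - EXs n M)) = n - RR n M"
proof -
  have sub: "(\<lambda>i. (i, True)) ` ({1..n} - EXs n M) \<subseteq> terminals n" by (auto simp: terminals_def)
  have "card ((\<lambda>i. (i, True)) ` ({1..n} - EXs n M)) = card ({1..n} - EXs n M)"
    by (rule card_image) (auto simp: inj_on_def)
  also have "\<dots> = n - RR n M" unfolding RR_def using EXs_sub[of n M] by (simp add: card_Diff_subset)
  finally show ?thesis using sub by (simp add: Int_absorb1)
qed

lemma prob_ins:
  assumes n: "n \<ge> 1" and wp: "\<forall>i\<in>{1..n}. w i > 0" and K: "KK n (lm X) = 0" and R: "RR n (lm X) < n"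
  shows "ennreal (real (n - RR n (lm X)) / real (2 * n) / 3)
     \<le> emeasure (measure_pmf (hvl_prime n X)) {Y. accept n w X Y \<and> RR n (lm X) < RR n (lm Y)}"
proof -
  let ?G = "{Y. accept n w X Y \<and> RR n (lm X) < RR n (lm Y)}"
  let ?M = "lm X"
  define Gl where "Gl = (\<lambda>i. (i, True)) ` ({1..n} - EXs n ?M)"
  have szR: "size ?M = RR n ?M" using K R_le[of n ?M] by (simp add: KK_def)
  have good: "Y \<in> ?G" if u: "u \<in> Gl" and Y: "lm Y = ?M + {#u#}" for u Y
  proof -
    obtain i where i: "u = (i, True)" "i \<in> {1..n}" "i \<notin> EXs n ?M" using u by (auto simp: Gl_def)
    have "WM n w ?M < WM n w (lm Y) \<and> RR n ?M < RR n (lm Y)"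
      using ins_good[OF szR i(2,3) wp] Y i(1) by simp
    then show ?thesis by (simp add: accept_iff)
  qed
  have pu: "emeasure (measure_pmf (pmf_of_set (terminals n))) Gl = ennreal (real (n - RR n ?M) / real (2 * n))"
    using Gl_card[OF n, of ?M] terminals_fin[of n] terminals_ne[OF n]
    by (subst em_pmf_of_set) (auto simp: Gl_def terminals_card)
  have s2: "ennreal (real (n - RR n ?M) / real (2 * n)) \<le> emeasure (measure_pmf (case X of None \<Rightarrow> do { u \<leftarrow> pmf_of_set (terminals n); return_pmf (Some (Leaf u)) }
         | Some t \<Rightarrow> do {
             k \<leftarrow> pmf_of_set {..<nnodes t};
             u \<leftarrow> pmf_of_set (terminals n);
             b \<leftarrow> pmf_of_set (UNIV :: bool set);
             return_pmf (Some (ins_at k u b t)) })) ?G"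
  proof (cases X)
    case None
    have gN: "Some (Leaf u) \<in> ?G" if "u \<in> Gl" for u
      using good[OF that, of "Some (Leaf u)"] by (simp add: None lm_None lm_Some)
    have "ennreal 1 * emeasure (measure_pmf (pmf_of_set (terminals n))) Gl \<le>
       emeasure (measure_pmf (bind_pmf (pmf_of_set (terminals n)) (\<lambda>u. return_pmf (Some (Leaf u))))) ?G"
      by (rule em_bind_lb) (use gN in simp)
    then show ?thesis using pu None by simp
  next
    case (Some t)
    have inner: "ennreal 1 \<le> emeasure (measure_pmf (bind_pmf (pmf_of_set (UNIV :: bool set)) (\<lambda>b. return_pmf (Some (ins_at k u b t))))) ?G"
      if "u \<in> Gl" for k u
    proof -
      have gS: "Some (ins_at k u b t) \<in> ?G" for b
        using good[OF that, of "Some (ins_at k u b t)"] by (simp add: Some lm_Some mset_ins)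
      have "ennreal 1 * emeasure (measure_pmf (pmf_of_set (UNIV :: bool set))) UNIV \<le>
         emeasure (measure_pmf (bind_pmf (pmf_of_set (UNIV :: bool set)) (\<lambda>b. return_pmf (Some (ins_at k u b t))))) ?G"
        by (rule em_bind_lb) (use gS in simp)
      then show ?thesis by simp
    qed
    have mid: "ennreal (real (n - RR n ?M) / real (2 * n)) \<le> emeasure (measure_pmf (bind_pmf (pmf_of_set (terminals n))
         (\<lambda>u. bind_pmf (pmf_of_set (UNIV :: bool set)) (\<lambda>b. return_pmf (Some (ins_at k u b t)))))) ?G" for k
    proof -
      have "ennreal 1 * emeasure (measure_pmf (pmf_of_set (terminals n))) Gl \<le> emeasure (measure_pmf (bind_pmf (pmf_of_set (terminals n))
         (\<lambda>u. bind_pmf (pmf_of_set (UNIV :: bool set)) (\<lambda>b. return_pmf (Some (ins_at k u b t)))))) ?G"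
        by (rule em_bind_lb) (use inner in simp)
      then show ?thesis using pu by simp
    qed
    have ne: "{..<nnodes t} \<noteq> {}" by (cases t) (auto simp: lessThan_empty_iff)
    have "ennreal (real (n - RR n ?M) / real (2 * n)) * emeasure (measure_pmf (pmf_of_set {..<nnodes t})) {..<nnodes t} \<le>
       emeasure (measure_pmf (bind_pmf (pmf_of_set {..<nnodes t}) (\<lambda>k. bind_pmf (pmf_of_set (terminals n))
         (\<lambda>u. bind_pmf (pmf_of_set (UNIV :: bool set)) (\<lambda>b. return_pmf (Some (ins_at k u b t))))))) ?G"
      by (rule em_bind_lb) (use mid in simp)
    then show ?thesis using ne by (simp add: Some)
  qed
  have "ennreal (real (n - RR n ?M) / real (2 * n)) * emeasure (measure_pmf (pmf_of_set {0::nat,1,2})) {1}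
      \<le> emeasure (measure_pmf (hvl_prime n X)) ?G"
    unfolding hvl_prime_def by (rule em_bind_lb) (use s2 in simp)
  then have "ennreal (real (n - RR n ?M) / real (2 * n)) * ennreal (1/3) \<le> emeasure (measure_pmf (hvl_prime n X)) ?G"
    using em3[of 1] by simp
  then show ?thesis by (simp add: ennreal_mult[symmetric])
qed



lemma ennreal_add_le: "0 \<le> a \<Longrightarrow> 0 \<le> b \<Longrightarrow> a + b \<le> c \<Longrightarrow> ennreal a + ennreal b \<le> ennreal c"
  by (simp add: ennreal_plus[symmetric] del: ennreal_plus)

lemma drift:
  assumes n: "n \<ge> 1" and wp: "\<forall>i\<in>{1..n}. w i > 0" and nopt: "\<not> (KK n (lm X) = 0 \<and> RR n (lm X) = n)"
  shows "(\<integral>\<^sup>+Y. ennreal (V n (lm Y)) \<partial>measure_pmf (gp_step n w X)) + 1 \<le> ennreal (V n (lm X))"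
proof -
  define g where "g Y = (if accept n w X Y then Y else X)" for Y
  have eq: "(\<integral>\<^sup>+Y. ennreal (V n (lm Y)) \<partial>measure_pmf (gp_step n w X))
      = (\<integral>\<^sup>+Y. ennreal (V n (lm (g Y))) \<partial>measure_pmf (hvl_prime n X))"
    by (simp add: gp_step_def g_def)
  let ?M = "lm X"
  define K where "K = KK n ?M"
  define R where "R = RR n ?M"
  define L where "L = size ?M"
  have LKR: "L = K + R" using R_le[of n ?M] by (simp add: K_def R_def L_def KK_def)
  have Rn: "R \<le> n" using R_le_n by (simp add: R_def)
  have gY: "accept n w X Y \<Longrightarrow> g Y = Y" "\<not> accept n w X Y \<Longrightarrow> g Y = X" for Y by (auto simp: g_def)
  have Vnn: "\<And>M. 0 \<le> V n M" by (rule V_nonneg)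
  show ?thesis
  proof (cases "K > 0")
    case True
    let ?G = "{Y. accept n w X Y \<and> KK n (lm Y) < KK n (lm X)}"
    define d where "d = 6 + 6 * real n / real K"
    define D where "D = size (filter_mset (del_ok n w ?M) ?M)"
    define q where "q = real D / real L / 3"
    have pw: "ennreal (V n (lm (g Y))) + ennreal d * indicator ?G Y \<le> ennreal (V n ?M)"
      if Y: "Y \<in> set_pmf (hvl_prime n X)" for Y
    proof (cases "accept n w X Y")
      case acc: True
      have m: "RR n ?M \<le> RR n (lm Y)" "KK n (lm Y) \<le> KK n ?M" using mono_step[OF n wp Y acc] by auto
      show ?thesis
      proof (cases "Y \<in> ?G")
        case True
        then have "V n (lm Y) + d \<le> V n ?M" using V_dropK[of n "lm Y" ?M] m by (simp add: d_def K_def)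
        then have "ennreal (V n (lm Y)) + ennreal d \<le> ennreal (V n ?M)"
          using ennreal_add_le[OF Vnn _ \<open>V n (lm Y) + d \<le> V n ?M\<close>] by (simp add: d_def)
        then show ?thesis using True gY(1)[OF acc] by simp
      next
        case False
        then show ?thesis using gY(1)[OF acc] V_mono[OF m(2,1)] by (simp add: ennreal_leI)
      qed
    next
      case False
      then show ?thesis using gY(2) by simp
    qed
    obtain t where X: "X = Some t" using True LKR by (cases X) (auto simp: L_def lm_None)
    have pr: "ennreal q \<le> emeasure (measure_pmf (hvl_prime n X)) ?G"
      using prob_del[OF n wp X] by (simp add: q_def D_def L_def)
    have dc: "L \<le> 2 * D + R" using del_count[OF wp, of ?M] by (simp add: L_def D_def R_def)
    have dq: "1 \<le> d * q"
    proof -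
      have Kp: "real K > 0" using True by simp
      have Lp: "real L > 0" using True LKR by simp
      have e: "d * q = (real K + real n) * (2 * real D) / (real K * real L)"
        unfolding d_def q_def using Kp Lp by (simp add: field_simps)
      have "real K * real L \<le> (real K + real n) * (2 * real D)"
      proof -
        have "real L \<le> real K + real n" using LKR Rn by simp
        moreover have "real K \<le> 2 * real D" using dc LKR by simp
        ultimately have "real K * real L \<le> (2 * real D) * (real K + real n)"
          using Kp by (intro mult_mono) auto
        then show ?thesis by (simp add: mult.commute)
      qed
      then show ?thesis unfolding e using Kp Lp by simp
    qed
    have "(\<integral>\<^sup>+Y. ennreal (V n (lm (g Y))) \<partial>measure_pmf (hvl_prime n X)) + 1 \<le> ennreal (V n ?M)"
      by (rule DR[OF pw pr dq]) (auto simp: d_def q_def)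
    then show ?thesis using eq by simp
  next
    case False
    then have K0: "K = 0" by simp
    with nopt Rn have Rl: "R < n" by (simp add: K_def R_def)
    let ?G = "{Y. accept n w X Y \<and> RR n (lm X) < RR n (lm Y)}"
    define d where "d = 6 * real n / real (n - R)"
    define q where "q = real (n - R) / real (2 * n) / 3"
    have pw: "ennreal (V n (lm (g Y))) + ennreal d * indicator ?G Y \<le> ennreal (V n ?M)"
      if Y: "Y \<in> set_pmf (hvl_prime n X)" for Y
    proof (cases "accept n w X Y")
      case acc: True
      have m: "RR n ?M \<le> RR n (lm Y)" "KK n (lm Y) \<le> KK n ?M" using mono_step[OF n wp Y acc] by auto
      show ?thesis
      proof (cases "Y \<in> ?G")
        case True
        then have "V n (lm Y) + d \<le> V n ?M" using V_dropR[of n "lm Y" ?M] m R_le_n[of n "lm Y"] by (simp add: d_def R_def)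
        then have "ennreal (V n (lm Y)) + ennreal d \<le> ennreal (V n ?M)"
          using ennreal_add_le[OF Vnn _ \<open>V n (lm Y) + d \<le> V n ?M\<close>] by (simp add: d_def)
        then show ?thesis using True gY(1)[OF acc] by simp
      next
        case False
        then show ?thesis using gY(1)[OF acc] V_mono[OF m(2,1)] by (simp add: ennreal_leI)
      qed
    next
      case False
      then show ?thesis using gY(2) by simp
    qed
    have pr: "ennreal q \<le> emeasure (measure_pmf (hvl_prime n X)) ?G"
      using prob_ins[OF n wp] K0 Rl by (simp add: q_def K_def R_def)
    have dq: "1 \<le> d * q" using Rl n unfolding d_def q_def by (simp add: field_simps)
    have "(\<integral>\<^sup>+Y. ennreal (V n (lm (g Y))) \<partial>measure_pmf (hvl_prime n X)) + 1 \<le> ennreal (V n ?M)"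
      by (rule DR[OF pw pr dq]) (auto simp: d_def q_def)
    then show ?thesis using eq by simp
  qed
qed



lemma opt_char:
  assumes n: "n \<ge> 1" and wp: "\<forall>i\<in>{1..n}. w i > 0" and K: "KK n (lm X) = 0" and R: "RR n (lm X) = n"
  shows "optimal n w X"
proof -
  let ?M = "lm X"
  have E: "EXs n ?M = {1..n}" using R EXs_sub[of n ?M] unfolding RR_def
    by (metis card_atLeastAtMost card_subset_eq diff_Suc_1 finite_atLeastAtMost)
  have szM: "size ?M = n" using K R R_le[of n ?M] by (simp add: KK_def)
  have WX: "wmaj n w X = sum w {1..n}" by (simp add: wmaj_WM WM_def E)
  have le: "wmaj n w Y \<le> wmaj n w X" for Y
    unfolding wmaj_WM WM_def E using EXs_sub[of n "lm Y"] wp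
    by (intro sum_mono2) (auto intro: less_imp_le)
  have cp: "cplx X \<le> cplx Y" if eq: "wmaj n w Y = wmaj n w X" for Y
  proof -
    have "EXs n (lm Y) = {1..n}"
    proof (rule ccontr)
      assume "EXs n (lm Y) \<noteq> {1..n}"
      then have "EXs n (lm Y) \<subset> {1..n}" using EXs_sub by blast
      then have "sum w (EXs n (lm Y)) < sum w {1..n}" using sum_strict[of _ "{1..n}" n w] wp by simp
      then show False using eq WX by (simp add: wmaj_WM WM_def)
    qed
    then have "RR n (lm Y) = n" by (simp add: RR_def)
    then have "n \<le> size (lm Y)" using R_le[of n "lm Y"] by simp
    moreover have "cplx X = cf (size ?M)" "cplx Y = cf (size (lm Y))" by (simp_all add: cplx_size cf_def)
    ultimately show ?thesis using szM cf_le by simp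
  qed
  show ?thesis unfolding optimal_def using le cp by auto
qed

definition SS :: "nat \<Rightarrow> (nat \<Rightarrow> real) \<Rightarrow> stree option \<Rightarrow> stree option pmf" where
  "SS n w X = (if optimal n w X then return_pmf X else gp_step n w X)"

lemma run_Suc: "stopped_run n w X0 (Suc t) = bind_pmf (stopped_run n w X0 t) (SS n w)"
proof -
  have "SS n w = (\<lambda>X. if optimal n w X then return_pmf X else gp_step n w X)"
    by (rule ext) (simp add: SS_def)
  then show ?thesis by (simp add: stopped_run_def)
qed

lemma run_0: "stopped_run n w X0 0 = return_pmf X0"
  by (simp add: stopped_run_def)

lemma step_bound:
  assumes n: "n \<ge> 1" and wp: "\<forall>i\<in>{1..n}. w i > 0"
  shows "(\<integral>\<^sup>+Y. ennreal (V n (lm Y)) \<partial>measure_pmf (SS n w X)) + indicator {X. \<not> optimal n w X} X \<le> ennreal (V n (lm X))"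
proof (cases "optimal n w X")
  case True
  then show ?thesis by (simp add: SS_def)
next
  case False
  then have "\<not> (KK n (lm X) = 0 \<and> RR n (lm X) = n)" using opt_char[OF n wp] by blast
  then show ?thesis using drift[OF n wp] False by (simp add: SS_def)
qed

lemma partial_bound:
  assumes n: "n \<ge> 1" and wp: "\<forall>i\<in>{1..n}. w i > 0"
  shows "(\<Sum>t<T. ennreal (measure_pmf.prob (stopped_run n w X0 t) {X. \<not> optimal n w X}))
     + (\<integral>\<^sup>+Y. ennreal (V n (lm Y)) \<partial>measure_pmf (stopped_run n w X0 T)) \<le> ennreal (V n (lm X0))"
proof (induction T)
  case 0
  then show ?case by (simp add: run_0)
next
  case (Suc T)
  let ?p = "stopped_run n w X0 T"
  let ?A = "{X. \<not> optimal n w X}"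
  have "(\<integral>\<^sup>+Y. ennreal (V n (lm Y)) \<partial>measure_pmf (stopped_run n w X0 (Suc T))) + ennreal (measure_pmf.prob ?p ?A)
     = (\<integral>\<^sup>+X. (\<integral>\<^sup>+Y. ennreal (V n (lm Y)) \<partial>measure_pmf (SS n w X)) + indicator ?A X \<partial>measure_pmf ?p)"
    by (simp add: run_Suc nn_integral_add measure_pmf.emeasure_eq_measure[symmetric])
  also have "\<dots> \<le> (\<integral>\<^sup>+X. ennreal (V n (lm X)) \<partial>measure_pmf ?p)"
    by (rule nn_integral_mono) (rule step_bound[OF n wp])
  finally have st: "(\<integral>\<^sup>+Y. ennreal (V n (lm Y)) \<partial>measure_pmf (stopped_run n w X0 (Suc T))) + ennreal (measure_pmf.prob ?p ?A)
      \<le> (\<integral>\<^sup>+X. ennreal (V n (lm X)) \<partial>measure_pmf ?p)" .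
  have "(\<Sum>t<Suc T. ennreal (measure_pmf.prob (stopped_run n w X0 t) ?A))
     + (\<integral>\<^sup>+Y. ennreal (V n (lm Y)) \<partial>measure_pmf (stopped_run n w X0 (Suc T)))
     = (\<Sum>t<T. ennreal (measure_pmf.prob (stopped_run n w X0 t) ?A))
     + ((\<integral>\<^sup>+Y. ennreal (V n (lm Y)) \<partial>measure_pmf (stopped_run n w X0 (Suc T))) + ennreal (measure_pmf.prob ?p ?A))"
    by (simp add: ac_simps)
  also have "\<dots> \<le> (\<Sum>t<T. ennreal (measure_pmf.prob (stopped_run n w X0 t) ?A))
     + (\<integral>\<^sup>+X. ennreal (V n (lm X)) \<partial>measure_pmf ?p)"
    using st by (rule add_left_mono)
  also have "\<dots> \<le> ennreal (V n (lm X0))" using Suc .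
  finally show ?case .
qed

lemma opt_time_le:
  assumes n: "n \<ge> 1" and wp: "\<forall>i\<in>{1..n}. w i > 0"
  shows "opt_time n w X0 \<le> ennreal (V n (lm X0))"
proof -
  have "(\<Sum>t<T. ennreal (measure_pmf.prob (stopped_run n w X0 t) {X. \<not> optimal n w X})) \<le> ennreal (V n (lm X0))" for T
  proof -
    have "(\<Sum>t<T. ennreal (measure_pmf.prob (stopped_run n w X0 t) {X. \<not> optimal n w X}))
      \<le> (\<Sum>t<T. ennreal (measure_pmf.prob (stopped_run n w X0 t) {X. \<not> optimal n w X}))
       + (\<integral>\<^sup>+Y. ennreal (V n (lm Y)) \<partial>measure_pmf (stopped_run n w X0 T))" by simp
    also note partial_bound[OF n wp]
    finally show ?thesis .
  qed
  then show ?thesis unfolding opt_time_def by (intro suminf_le_const) auto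
qed



lemma H_le_ln: "m \<ge> 1 \<Longrightarrow> H m \<le> 1 + ln (real m)"
proof (induction m rule: dec_induct)
  case base then show ?case by (simp add: H_def)
next
  case (step m)
  have m0: "real m > 0" using step by simp
  have "ln (real m / real (Suc m)) \<le> real m / real (Suc m) - 1"
    by (rule ln_le_minus_one) (use m0 in simp)
  moreover have "ln (real m / real (Suc m)) = ln (real m) - ln (real (Suc m))"
    using m0 by (simp add: ln_div)
  moreover have "real m / real (Suc m) - 1 = - (1 / real (Suc m))" by (simp add: field_simps)
  ultimately have "ln (real m) + 1 / real (Suc m) \<le> ln (real (Suc m))" by linarith
  then show ?case using step by (simp add: H_Suc)
qed

lemma nlnn: "n \<ge> 1 \<Longrightarrow> real n - 1 \<le> real n * ln (real n)"
proof -
  assume n: "n \<ge> 1"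
  then have n0: "real n > 0" by simp
  have "ln (1 / real n) \<le> 1 / real n - 1" by (rule ln_le_minus_one) (use n0 in simp)
  then have "- ln (real n) \<le> 1 / real n - 1" using n0 by (simp add: ln_div)
  then have "real n * (- ln (real n)) \<le> real n * (1 / real n - 1)" using n0 by (intro mult_left_mono) auto
  then show ?thesis using n0 by (simp add: algebra_simps)
qed

lemma nlnL: assumes "n \<ge> 1" "L \<ge> 1" shows "real n * ln (real L) \<le> real L + 2 * (real n * ln (real n))"
proof -
  have n0: "real n > 0" and L0: "real L > 0" using assms by auto
  have q: "real L / (real n)^2 > 0" using n0 L0 by simp
  have "ln (real L / (real n)^2) \<le> real L / (real n)^2 - 1" by (rule ln_le_minus_one[OF q])
  moreover have "ln (real L / (real n)^2) = ln (real L) - 2 * ln (real n)"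
    using n0 L0 by (simp add: ln_div ln_realpow)
  ultimately have "ln (real L) \<le> real L / (real n)^2 + 2 * ln (real n)" by linarith
  then have "real n * ln (real L) \<le> real n * (real L / (real n)^2 + 2 * ln (real n))"
    using n0 by (intro mult_left_mono) auto
  also have "\<dots> = real L / real n + 2 * (real n * ln (real n))" using n0 by (simp add: field_simps power2_eq_square)
  also have "real L / real n \<le> real L" using n0 L0 assms(1) by (simp add: divide_le_eq)
  finally show ?thesis by simp
qed

lemma arith_aux: fixes V L a b c d nn C :: real
  shows "V \<le> 6*L + 6*a + 6*b \<Longrightarrow> a \<le> nn + c \<Longrightarrow> c \<le> L + 2*d \<Longrightarrow> b \<le> nn + d \<Longrightarrow> nn - 1 \<le> d
   \<Longrightarrow> 0 \<le> d \<Longrightarrow> L \<le> C \<Longrightarrow> 0 \<le> L \<Longrightarrow> V \<le> 30*(C + d + 1)"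
  by (smt (verit))

lemma V_bound: assumes n: "n \<ge> 1"
  shows "V n M \<le> 30 * (real (cf (size M)) + real n * ln (real n) + 1)"
proof -
  let ?L = "size M"
  have K: "KK n M \<le> ?L" by (simp add: KK_def)
  have nR: "n - RR n M \<le> n" by simp
  have lnn: "0 \<le> real n * ln (real n)" using n by simp
  have Hn: "H n \<le> 1 + ln (real n)" using H_le_ln n by simp
  have a: "real n - 1 \<le> real n * ln (real n)" using nlnn n by simp
  have V1: "V n M \<le> 6 * real ?L + 6 * real n * H ?L + 6 * real n * H n"
    unfolding V_def using K H_mono[OF K] H_mono[OF nR] by (intro add_mono mult_left_mono) auto
  have nHn: "real n * H n \<le> real n + real n * ln (real n)"
    using mult_left_mono[OF Hn, of "real n"] by (simp add: algebra_simps)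
  show ?thesis
  proof (cases "?L = 0")
    case True
    have e: "6 * real n * H n = 6 * (real n * H n)" by simp
    show ?thesis using V1 nHn a lnn True unfolding e by (simp add: H_0 cf_def)
  next
    case False
    then have L1: "?L \<ge> 1" by linarith
    have HL: "H ?L \<le> 1 + ln (real ?L)" using H_le_ln L1 by simp
    have nHL: "real n * H ?L \<le> real n + real n * ln (real ?L)"
      using mult_left_mono[OF HL, of "real n"] by (simp add: algebra_simps)
    have b: "real n * ln (real ?L) \<le> real ?L + 2 * (real n * ln (real n))" using nlnL[OF n L1] .
    have "cf ?L = 2 * ?L - 1" using L1 by (simp add: cf_def)
    then have "?L \<le> cf ?L" using L1 by linarith
    then have cfL: "real ?L \<le> real (cf ?L)" by simp
    have e: "6 * real n * H ?L = 6 * (real n * H ?L)" "6 * real n * H n = 6 * (real n * H n)" by simp_all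
    show ?thesis using arith_aux[OF V1[unfolded e] nHL b nHn a lnn cfL of_nat_0_le_iff] .
  qed
qed

theorem theorem3:
  shows "\<exists>c::real. c > 0 \<and>
    (\<forall>n::nat. \<forall>w::nat \<Rightarrow> real. \<forall>X0::stree option.
       n \<ge> 1 \<longrightarrow>
       (\<forall>i\<in>{1..n}. w i > 0) \<longrightarrow>
       (\<forall>i j. 1 \<le> i \<longrightarrow> i \<le> j \<longrightarrow> j \<le> n \<longrightarrow> w j \<le> w i) \<longrightarrow>
       over_T n X0 \<longrightarrow>
       opt_time n w X0 \<le> ennreal (c * (real (cplx X0) + real n * ln (real n) + 1)))"
proof (intro exI[of _ 30] conjI allI impI)
  fix n :: nat and w :: "nat \<Rightarrow> real" and X0 :: "stree option"
  assume n: "n \<ge> 1" and wp: "\<forall>i\<in>{1..n}. w i > 0"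
  have "opt_time n w X0 \<le> ennreal (V n (lm X0))" by (rule opt_time_le[OF n wp])
  also have "\<dots> \<le> ennreal (30 * (real (cplx X0) + real n * ln (real n) + 1))"
  proof (rule ennreal_leI)
    have "cplx X0 = cf (size (lm X0))" by (simp add: cplx_size cf_def)
    then show "V n (lm X0) \<le> 30 * (real (cplx X0) + real n * ln (real n) + 1)" using V_bound[OF n] by simp
  qed
  finally show "opt_time n w X0 \<le> ennreal (30 * (real (cplx X0) + real n * ln (real n) + 1))" .
qed simp

end
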